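(* Let $\mathcal{X}'\subseteq\mathcal{X}$ be a set of pairwise backward kinematically inseparable observations. Then there exists a policy $\pi\in\Upsilon$ that maximizes $\mathbb{P}_\pi(x')$ over $\Upsilon$ simultaneously for all $x'\in\mathcal{X}'$. Further, this policy is an optimal policy (over $\Upsilon$) for the reward function $R'(x,a)=1\{x\in\mathcal{X}'\}$.
   Context: Block MDP: horizon $H$; finite latent states $\mathcal{S}=\sqcup_h\mathcal{S}_h$; countable observations $\mathcal{X}=\sqcup_h\mathcal{X}_h$; finite actions $\mathcal{A}$; start distribution $\mu\in\Delta(\mathcal{S}_1)$; transitions $T(\cdot\mid s,a)\in\Delta(\mathcal{S}_{h+1})$ for $s\in\mathcal{S}_h$; emissions $q(\cdot\mid s)\in\Delta(\mathcal{X}_h)$ with pairwise disjoint supports, decoder $g^\star$. Episodes: $s_1\sim\mu$, $x_h\sim q(\cdot\mid s_h)$, agent chooses $a_h$, $s_{h+1}\sim T(\cdot\mid s_h,a_h)$. $\Upsilon$ is the set of all policies $\mathcal{X}\to\Delta(\mathcal{A})$; $\mathbb{P}_\pi(x)$ is the probability that the trajectory under $\pi$ visits $x$; optimal for $R'$ means maximizing $\mathbb{E}_\pi[\sum_hR'(x_h,a_h)]$. Observation transitions $T(x'\mid x,a)=q(x'\mid g^\star(x'))T(g^\star(x')\mid g^\star(x),a)$; for full-support $u\in\Delta(\mathcal{X}\times\mathcal{A})$, $\mathbb{P}_u(x,a\mid x')=\frac{T(x'\mid x,a)u(x,a)}{\sum_{\tilde x,\tilde a}T(x'\mid\tilde x,\tilde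 a)u(\tilde x,\tilde a)}$; $x_1',x_2'$ are backward kinematically inseparable if $\mathbb{P}_u(\cdot\mid x_1')=\mathbb{P}_u(\cdot\mid x_2')$ for every full-support $u$. *)

theory Defs
  imports "HOL-Probability.Probability"
begin

text \<open>Block MDP data: horizon H; latent states 's with layer function levS
  (state s lies in S_(levS s), layers 1..H); start distribution mu; transitions T;
  emissions q; decoder g (the layer of an observation x is levS (g x)).\<close>

definition block_mdp ::
  "nat \<Rightarrow> ('s \<Rightarrow> nat) \<Rightarrow> 's pmf \<Rightarrow> ('s \<Rightarrow> 'a \<Rightarrow> 's pmf) \<Rightarrow> ('s \<Rightarrow> 'x pmf) \<Rightarrow> ('x \<Rightarrow> 's) \<Rightarrow> bool" where
  "block_mdp H levS mu T q g \<longleftrightarrow>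
     (\<forall>s. 1 \<le> levS s \<and> levS s \<le> H) \<and>
     (\<forall>s\<in>set_pmf mu. levS s = 1) \<and>
     (\<forall>s a. levS s < H \<longrightarrow> (\<forall>s'\<in>set_pmf (T s a). levS s' = Suc (levS s))) \<and>
     (\<forall>s. \<forall>x\<in>set_pmf (q s). g x = s) \<and>
     (\<forall>x. x \<in> set_pmf (q (g x)))"

fun traj :: "('s \<Rightarrow> 'a \<Rightarrow> 's pmf) \<Rightarrow> ('s \<Rightarrow> 'x pmf) \<Rightarrow> ('x \<Rightarrow> 'a pmf) \<Rightarrow> nat \<Rightarrow> 's \<Rightarrow> ('x \<times> 'a) list pmf" where
  "traj T q pol 0 s = return_pmf []"
| "traj T q pol (Suc n) s =
     bind_pmf (q s) (\<lambda>x. bind_pmf (pol x) (\<lambda>a. bind_pmf (T s a) (\<lambda>s'.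
       map_pmf (\<lambda>rest. (x, a) # rest) (traj T q pol n s'))))"

definition episode :: "nat \<Rightarrow> 's pmf \<Rightarrow> ('s \<Rightarrow> 'a \<Rightarrow> 's pmf) \<Rightarrow> ('s \<Rightarrow> 'x pmf) \<Rightarrow> ('x \<Rightarrow> 'a pmf) \<Rightarrow> ('x \<times> 'a) list pmf" where
  "episode H mu T q pol = bind_pmf mu (traj T q pol H)"

definition visit_prob :: "nat \<Rightarrow> 's pmf \<Rightarrow> ('s \<Rightarrow> 'a \<Rightarrow> 's pmf) \<Rightarrow> ('s \<Rightarrow> 'x pmf) \<Rightarrow> ('x \<Rightarrow> 'a pmf) \<Rightarrow> 'x \<Rightarrow> real" where
  "visit_prob H mu T q pol x = measure_pmf.prob (episode H mu T q pol) {tr. x \<in> fst ` set tr}"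

definition exp_reward :: "nat \<Rightarrow> 's pmf \<Rightarrow> ('s \<Rightarrow> 'a \<Rightarrow> 's pmf) \<Rightarrow> ('s \<Rightarrow> 'x pmf) \<Rightarrow> ('x \<Rightarrow> 'a pmf) \<Rightarrow> ('x \<Rightarrow> 'a \<Rightarrow> real) \<Rightarrow> real" where
  "exp_reward H mu T q pol R = measure_pmf.expectation (episode H mu T q pol) (\<lambda>tr. sum_list (map (\<lambda>(x, a). R x a) tr))"

definition obs_trans :: "('s \<Rightarrow> 'a \<Rightarrow> 's pmf) \<Rightarrow> ('s \<Rightarrow> 'x pmf) \<Rightarrow> ('x \<Rightarrow> 's) \<Rightarrow> 'x \<Rightarrow> 'a \<Rightarrow> 'x \<Rightarrow> real" where
  "obs_trans T q g x a x' = pmf (q (g x')) x' * pmf (T (g x) a) (g x')"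

definition back_post :: "('s \<Rightarrow> 'a \<Rightarrow> 's pmf) \<Rightarrow> ('s \<Rightarrow> 'x pmf) \<Rightarrow> ('x \<Rightarrow> 's) \<Rightarrow> ('x \<times> 'a) pmf \<Rightarrow> 'x \<Rightarrow> 'x \<times> 'a \<Rightarrow> real" where
  "back_post T q g u x' p =
     obs_trans T q g (fst p) (snd p) x' * pmf u p /
     (\<Sum>\<^sub>\<infinity>p'. obs_trans T q g (fst p') (snd p') x' * pmf u p')"

definition backward_KI :: "('s \<Rightarrow> 'a \<Rightarrow> 's pmf) \<Rightarrow> ('s \<Rightarrow> 'x pmf) \<Rightarrow> ('x \<Rightarrow> 's) \<Rightarrow> 'x \<Rightarrow> 'x \<Rightarrow> bool" where
  "backward_KI T q g x1 x2 \<longleftrightarrow>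
     (\<forall>u :: ('x \<times> 'a) pmf. set_pmf u = UNIV \<longrightarrow> back_post T q g u x1 = back_post T q g u x2)"

end

theory Submission
  imports Defs
begin

lemma bm_lev1: "block_mdp H levS mu T q g \<Longrightarrow> 1 \<le> levS s" by (simp add: block_mdp_def)
lemma bm_levH: "block_mdp H levS mu T q g \<Longrightarrow> levS s \<le> H" by (simp add: block_mdp_def)
lemma bm_mu: "block_mdp H levS mu T q g \<Longrightarrow> s \<in> set_pmf mu \<Longrightarrow> levS s = 1" by (simp add: block_mdp_def)
lemma bm_T: "block_mdp H levS mu T q g \<Longrightarrow> levS s < H \<Longrightarrow> s' \<in> set_pmf (T s a) \<Longrightarrow> levS s' = Suc (levS s)"
  by (simp add: block_mdp_def)
lemma bm_q: "block_mdp H levS mu T q g \<Longrightarrow> x \<in> set_pmf (q s) \<Longrightarrow> g x = s" by (simp add: block_mdp_def)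
lemma bm_qg: "block_mdp H levS mu T q g \<Longrightarrow> x \<in> set_pmf (q (g x))" by (simp add: block_mdp_def)

lemma traj_levels:
  assumes bm: "block_mdp H levS mu T q g"
  shows "tr \<in> set_pmf (traj T q pol n s) \<Longrightarrow> levS s + n = Suc H \<Longrightarrow>
         map (\<lambda>p. levS (g (fst p))) tr = [levS s..<Suc H]"
proof (induction n arbitrary: s tr)
  case 0
  then show ?case using bm_levH[OF bm, of s] by simp
next
  case (Suc n)
  from Suc.prems(1) obtain x a s' rest where x: "x \<in> set_pmf (q s)" and s': "s' \<in> set_pmf (T s a)"
    and rest: "rest \<in> set_pmf (traj T q pol n s')" and tr: "tr = (x, a) # rest"
    by auto
  have gx: "g x = s" using bm_q[OF bm x] .
  show ?case
  proof (cases n)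
    case 0
    then have "rest = []" using rest by simp
    moreover have "levS s = H" using Suc.prems(2) 0 by simp
    ultimately show ?thesis using tr gx by simp
  next
    case (Suc m)
    then have lt: "levS s < H" using Suc.prems(2) by simp
    have "levS s' = Suc (levS s)" using bm_T[OF bm lt s'] .
    then have "map (\<lambda>p. levS (g (fst p))) rest = [Suc (levS s)..<Suc H]"
      using Suc.IH[OF rest] Suc.prems(2) by simp
    then show ?thesis using tr gx lt by (simp add: upt_conv_Cons)
  qed
qed

lemma episode_levels:
  assumes bm: "block_mdp H levS mu T q g"
    and tr: "tr \<in> set_pmf (episode H mu T q pol)"
  shows "map (\<lambda>p. levS (g (fst p))) tr = [1..<Suc H]"
proof -
  from tr obtain s where s: "s \<in> set_pmf mu" and "tr \<in> set_pmf (traj T q pol H s)"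
    by (auto simp: episode_def)
  moreover have "levS s = 1" using bm_mu[OF bm s] .
  ultimately show ?thesis using traj_levels[OF bm] by fastforce
qed

lemma episode_distinct:
  assumes bm: "block_mdp H levS mu T q g"
    and tr: "tr \<in> set_pmf (episode H mu T q pol)"
  shows "distinct (map fst tr)"
proof -
  have "distinct (map (\<lambda>p. levS (g (fst p))) tr)" using episode_levels[OF bm tr] by simp
  then have "distinct (map (\<lambda>x. levS (g x)) (map fst tr))" by (simp add: comp_def)
  then show ?thesis using distinct_map by blast
qed

lemma episode_length:
  assumes bm: "block_mdp H levS mu T q g"
    and tr: "tr \<in> set_pmf (episode H mu T q pol)"
  shows "length tr = H"
  using arg_cong[OF episode_levels[OF bm tr], of length] by simp

definition lsum :: "('x \<Rightarrow> 'a \<Rightarrow> real) \<Rightarrow> ('x \<times> 'a) list \<Rightarrow> ennreal" where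
  "lsum R tr = ennreal (sum_list (map (\<lambda>(x, a). R x a) tr))"

lemma lsum_Nil[simp]: "lsum R [] = 0" by (simp add: lsum_def)

lemma lsum_Cons:
  assumes "\<And>x a. 0 \<le> R x a"
  shows "lsum R ((x, a) # tr) = ennreal (R x a) + lsum R tr"
proof -
  have "0 \<le> sum_list (map (\<lambda>(x, a). R x a) tr)"
    by (rule sum_list_nonneg) (auto simp: assms)
  then show ?thesis by (simp add: lsum_def assms ennreal_plus)
qed

lemma nn_const_add:
  "(\<integral>\<^sup>+x. c + f x \<partial>measure_pmf p) = c + (\<integral>\<^sup>+x. f x \<partial>measure_pmf p)"
  by (simp add: nn_integral_add measure_pmf.emeasure_space_1)

lemma nn_const:
  "(\<integral>\<^sup>+x. c \<partial>measure_pmf p) = c"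
  by (simp add: measure_pmf.emeasure_space_1)

lemma nn_add:
  "(\<integral>\<^sup>+x. f x + h x \<partial>measure_pmf p) = (\<integral>\<^sup>+x. f x \<partial>measure_pmf p) + (\<integral>\<^sup>+x. h x \<partial>measure_pmf p)"
  by (simp add: nn_integral_add)

lemma E_traj_Suc:
  assumes "\<And>x a. 0 \<le> R x a"
  shows "(\<integral>\<^sup>+tr. lsum R tr \<partial>measure_pmf (traj T q pol (Suc n) s)) =
     (\<integral>\<^sup>+x. \<integral>\<^sup>+a. (ennreal (R x a) + (\<integral>\<^sup>+s'. \<integral>\<^sup>+tr. lsum R tr \<partial>measure_pmf (traj T q pol n s') \<partial>measure_pmf (T s a)))
        \<partial>measure_pmf (pol x) \<partial>measure_pmf (q s))"
  by (simp add: nn_integral_bind_pmf nn_integral_map_pmf lsum_Cons[OF assms] nn_const_add)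

definition amax :: "('a::finite \<Rightarrow> ennreal) \<Rightarrow> 'a" where
  "amax f = (SOME a. \<forall>b. f b \<le> f a)"

lemma amax: "f b \<le> f (amax (f :: 'a::finite \<Rightarrow> ennreal))"
proof -
  have "\<exists>a. \<forall>b. f b \<le> f a"
  proof -
    have "Max (range f) \<in> range f" by (rule Max_in) auto
    then obtain a where "Max (range f) = f a" by (metis imageE)
    moreover have "\<forall>b. f b \<le> Max (range f)" by simp
    ultimately show ?thesis by metis
  qed
  then show ?thesis unfolding amax_def by (rule someI_ex[where P = "\<lambda>a. \<forall>b. f b \<le> f a", THEN spec])
qed

primrec Vf :: "('s \<Rightarrow> 'a::finite \<Rightarrow> 's pmf) \<Rightarrow> ('s \<Rightarrow> 'x pmf) \<Rightarrow> ('x \<Rightarrow> 's) \<Rightarrow> ('x \<Rightarrow> 'a \<Rightarrow> real) \<Rightarrow> nat \<Rightarrow> 's \<Rightarrow> ennreal" where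
  "Vf T q g R 0 s = 0"
| "Vf T q g R (Suc n) s = (\<integral>\<^sup>+x. (\<lambda>f. f (amax f)) (\<lambda>a. ennreal (R x a) + (\<integral>\<^sup>+s'. Vf T q g R n s' \<partial>measure_pmf (T (g x) a))) \<partial>measure_pmf (q s))"

definition Qf where
  "Qf T q g R n x a = ennreal (R x a) + (\<integral>\<^sup>+s'. Vf T q g R n s' \<partial>measure_pmf (T (g x) a))"

lemma Qf_eq: "Qf T q g R n x = (\<lambda>a. ennreal (R x a) + (\<integral>\<^sup>+s'. Vf T q g R n s' \<partial>measure_pmf (T (g x) a)))"
  by (simp add: Qf_def fun_eq_iff)

lemma Vf_Suc': "Vf T q g R (Suc n) s = (\<integral>\<^sup>+x. Qf T q g R n x (amax (Qf T q g R n x)) \<partial>measure_pmf (q s))"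
  by (simp only: Vf.simps Qf_eq)

lemma DP_le:
  assumes bm: "block_mdp H levS mu T q g" and R: "\<And>x a. 0 \<le> (R :: 'x \<Rightarrow> 'a::finite \<Rightarrow> real) x a"
  shows "(\<integral>\<^sup>+tr. lsum R tr \<partial>measure_pmf (traj T q pol n s)) \<le> Vf T q g R n s"
proof (induction n arbitrary: s)
  case 0
  then show ?case by simp
next
  case (Suc n)
  have "(\<integral>\<^sup>+tr. lsum R tr \<partial>measure_pmf (traj T q pol (Suc n) s)) =
     (\<integral>\<^sup>+x. \<integral>\<^sup>+a. (ennreal (R x a) + (\<integral>\<^sup>+s'. \<integral>\<^sup>+tr. lsum R tr \<partial>measure_pmf (traj T q pol n s') \<partial>measure_pmf (T s a)))
        \<partial>measure_pmf (pol x) \<partial>measure_pmf (q s))" by (rule E_traj_Suc[OF R])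
  also have "\<dots> \<le> (\<integral>\<^sup>+x. Qf T q g R n x (amax (Qf T q g R n x)) \<partial>measure_pmf (q s))"
  proof (rule nn_integral_mono_AE, unfold AE_measure_pmf_iff, intro ballI)
    fix x assume x: "x \<in> set_pmf (q s)"
    have gx: "g x = s" using bm_q[OF bm x] .
    have "(\<integral>\<^sup>+a. (ennreal (R x a) + (\<integral>\<^sup>+s'. \<integral>\<^sup>+tr. lsum R tr \<partial>measure_pmf (traj T q pol n s') \<partial>measure_pmf (T s a))) \<partial>measure_pmf (pol x))
       \<le> (\<integral>\<^sup>+a. Qf T q g R n x (amax (Qf T q g R n x)) \<partial>measure_pmf (pol x))"
    proof (rule nn_integral_mono)
      fix a
      have "(ennreal (R x a) + (\<integral>\<^sup>+s'. \<integral>\<^sup>+tr. lsum R tr \<partial>measure_pmf (traj T q pol n s') \<partial>measure_pmf (T s a)))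
           \<le> Qf T q g R n x a"
        unfolding Qf_def gx by (intro add_left_mono nn_integral_mono Suc.IH)
      also have "\<dots> \<le> Qf T q g R n x (amax (Qf T q g R n x))" by (rule amax)
      finally show "(ennreal (R x a) + (\<integral>\<^sup>+s'. \<integral>\<^sup>+tr. lsum R tr \<partial>measure_pmf (traj T q pol n s') \<partial>measure_pmf (T s a)))
           \<le> Qf T q g R n x (amax (Qf T q g R n x))" .
    qed
    then show "(\<integral>\<^sup>+a. (ennreal (R x a) + (\<integral>\<^sup>+s'. \<integral>\<^sup>+tr. lsum R tr \<partial>measure_pmf (traj T q pol n s') \<partial>measure_pmf (T s a))) \<partial>measure_pmf (pol x))
       \<le> Qf T q g R n x (amax (Qf T q g R n x))" by (simp add: nn_const)
  qed
  also have "\<dots> = Vf T q g R (Suc n) s" by (rule Vf_Suc'[symmetric])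
  finally show ?case .
qed

definition polstar where
  "polstar H levS T q g R x = return_pmf (amax (Qf T q g R (H - levS (g x)) x))"

lemma DP_eq:
  assumes bm: "block_mdp H levS mu T q g" and R: "\<And>x a. 0 \<le> (R :: 'x \<Rightarrow> 'a::finite \<Rightarrow> real) x a"
  shows "n = 0 \<or> levS s + n = Suc H \<Longrightarrow>
     (\<integral>\<^sup>+tr. lsum R tr \<partial>measure_pmf (traj T q (polstar H levS T q g R) n s)) = Vf T q g R n s"
proof (induction n arbitrary: s)
  case 0
  then show ?case by simp
next
  case (Suc n)
  then have lev: "levS s + n = H" by simp
  have "(\<integral>\<^sup>+tr. lsum R tr \<partial>measure_pmf (traj T q (polstar H levS T q g R) (Suc n) s)) =
     (\<integral>\<^sup>+x. \<integral>\<^sup>+a. (ennreal (R x a) + (\<integral>\<^sup>+s'. \<integral>\<^sup>+tr. lsum R tr \<partial>measure_pmf (traj T q (polstar H levS T q g R) n s') \<partial>measure_pmf (T s a)))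
        \<partial>measure_pmf (polstar H levS T q g R x) \<partial>measure_pmf (q s))" by (rule E_traj_Suc[OF R])
  also have "\<dots> = (\<integral>\<^sup>+x. Qf T q g R n x (amax (Qf T q g R n x)) \<partial>measure_pmf (q s))"
  proof (rule nn_integral_cong_AE, unfold AE_measure_pmf_iff, intro ballI)
    fix x assume x: "x \<in> set_pmf (q s)"
    have gx: "g x = s" using bm_q[OF bm x] .
    have hn: "H - levS s = n" using lev by simp
    have eq: "(\<integral>\<^sup>+s'. \<integral>\<^sup>+tr. lsum R tr \<partial>measure_pmf (traj T q (polstar H levS T q g R) n s') \<partial>measure_pmf (T s a))
        = (\<integral>\<^sup>+s'. Vf T q g R n s' \<partial>measure_pmf (T s a))" for a
    proof (rule nn_integral_cong_AE, unfold AE_measure_pmf_iff, intro ballI)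
      fix s' assume s': "s' \<in> set_pmf (T s a)"
      show "(\<integral>\<^sup>+tr. lsum R tr \<partial>measure_pmf (traj T q (polstar H levS T q g R) n s')) = Vf T q g R n s'"
      proof (cases n)
        case 0 then show ?thesis by simp
      next
        case (Suc m)
        then have "levS s < H" using lev by simp
        then have "levS s' = Suc (levS s)" using bm_T[OF bm _ s'] by simp
        then show ?thesis using Suc.IH lev by simp
      qed
    qed
    show "(\<integral>\<^sup>+a. (ennreal (R x a) + (\<integral>\<^sup>+s'. \<integral>\<^sup>+tr. lsum R tr \<partial>measure_pmf (traj T q (polstar H levS T q g R) n s') \<partial>measure_pmf (T s a)))
        \<partial>measure_pmf (polstar H levS T q g R x)) = Qf T q g R n x (amax (Qf T q g R n x))"
      unfolding eq by (simp add: polstar_def hn Qf_def gx)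
  qed
  also have "\<dots> = Vf T q g R (Suc n) s" by (rule Vf_Suc'[symmetric])
  finally show ?case .
qed

lemma DP:
  assumes bm: "block_mdp H levS mu T q g" and R: "\<And>x a. 0 \<le> (R :: 'x \<Rightarrow> 'a::finite \<Rightarrow> real) x a"
  shows "\<exists>ps. \<forall>pol. (\<integral>\<^sup>+tr. lsum R tr \<partial>measure_pmf (episode H mu T q pol))
                    \<le> (\<integral>\<^sup>+tr. lsum R tr \<partial>measure_pmf (episode H mu T q ps))"
proof (intro exI allI)
  fix pol
  have "(\<integral>\<^sup>+tr. lsum R tr \<partial>measure_pmf (episode H mu T q pol))
      = (\<integral>\<^sup>+s. \<integral>\<^sup>+tr. lsum R tr \<partial>measure_pmf (traj T q pol H s) \<partial>measure_pmf mu)"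
    by (simp add: episode_def nn_integral_bind_pmf)
  also have "\<dots> \<le> (\<integral>\<^sup>+s. Vf T q g R H s \<partial>measure_pmf mu)"
    by (intro nn_integral_mono DP_le[OF bm R])
  also have "\<dots> = (\<integral>\<^sup>+s. \<integral>\<^sup>+tr. lsum R tr \<partial>measure_pmf (traj T q (polstar H levS T q g R) H s) \<partial>measure_pmf mu)"
  proof (rule nn_integral_cong_AE, unfold AE_measure_pmf_iff, intro ballI)
    fix s assume "s \<in> set_pmf mu"
    then have "levS s = 1" using bm_mu[OF bm] by simp
    then show "Vf T q g R H s = (\<integral>\<^sup>+tr. lsum R tr \<partial>measure_pmf (traj T q (polstar H levS T q g R) H s))"
      using DP_eq[OF bm R, of H s] by simp
  qed
  also have "\<dots> = (\<integral>\<^sup>+tr. lsum R tr \<partial>measure_pmf (episode H mu T q (polstar H levS T q g R)))"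
    by (simp add: episode_def nn_integral_bind_pmf)
  finally show "(\<integral>\<^sup>+tr. lsum R tr \<partial>measure_pmf (episode H mu T q pol))
      \<le> (\<integral>\<^sup>+tr. lsum R tr \<partial>measure_pmf (episode H mu T q (polstar H levS T q g R)))" .
qed

lemma count_traj:
  assumes bm: "block_mdp H levS mu T q g"
    and phi: "\<And>x. 0 \<le> \<phi> x" and psi: "\<And>y a. 0 \<le> \<psi> y a"
    and psieq: "\<And>y a. ennreal (\<psi> y a) = (\<integral>\<^sup>+x. ennreal (\<phi> x) \<partial>measure_pmf (bind_pmf (T (g y) a) q))"
  shows "levS s + Suc n = Suc H \<Longrightarrow>
    (\<integral>\<^sup>+tr. lsum (\<lambda>x a. \<phi> x) tr \<partial>measure_pmf (traj T q pol (Suc n) s))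
    = (\<integral>\<^sup>+x. ennreal (\<phi> x) \<partial>measure_pmf (q s))
      + (\<integral>\<^sup>+tr. lsum (\<lambda>y a. if levS (g y) < H then \<psi> y a else 0) tr \<partial>measure_pmf (traj T q pol (Suc n) s))"
proof (induction n arbitrary: s)
  case (0 s)
  note lev = this
  let ?pl = "\<lambda>y a. if levS (g y) < H then \<psi> y a else 0"
  have pl: "\<And>y a. 0 \<le> ?pl y a" using psi by simp
  have "(\<integral>\<^sup>+tr. lsum (\<lambda>x a. \<phi> x) tr \<partial>measure_pmf (traj T q pol (Suc 0) s))
     = (\<integral>\<^sup>+x. \<integral>\<^sup>+a. (ennreal (\<phi> x) + (\<integral>\<^sup>+s'. \<integral>\<^sup>+tr. lsum (\<lambda>x a. \<phi> x) tr \<partial>measure_pmf (traj T q pol 0 s') \<partial>measure_pmf (T s a)))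
        \<partial>measure_pmf (pol x) \<partial>measure_pmf (q s))" by (rule E_traj_Suc) (simp add: phi)
  also have "\<dots> = (\<integral>\<^sup>+x. ennreal (\<phi> x) \<partial>measure_pmf (q s))" by (simp add: nn_const)
  finally have L: "(\<integral>\<^sup>+tr. lsum (\<lambda>x a. \<phi> x) tr \<partial>measure_pmf (traj T q pol (Suc 0) s)) = (\<integral>\<^sup>+x. ennreal (\<phi> x) \<partial>measure_pmf (q s))" .
  have "(\<integral>\<^sup>+tr. lsum ?pl tr \<partial>measure_pmf (traj T q pol (Suc 0) s))
     = (\<integral>\<^sup>+x. \<integral>\<^sup>+a. (ennreal (?pl x a) + (\<integral>\<^sup>+s'. \<integral>\<^sup>+tr. lsum ?pl tr \<partial>measure_pmf (traj T q pol 0 s') \<partial>measure_pmf (T s a)))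
        \<partial>measure_pmf (pol x) \<partial>measure_pmf (q s))" by (rule E_traj_Suc[OF pl])
  also have "\<dots> = 0"
  proof -
    have "(\<integral>\<^sup>+x. \<integral>\<^sup>+a. (ennreal (?pl x a) + (\<integral>\<^sup>+s'. \<integral>\<^sup>+tr. lsum ?pl tr \<partial>measure_pmf (traj T q pol 0 s') \<partial>measure_pmf (T s a)))
        \<partial>measure_pmf (pol x) \<partial>measure_pmf (q s)) = (\<integral>\<^sup>+x. 0 \<partial>measure_pmf (q s))"
    proof (rule nn_integral_cong_AE, unfold AE_measure_pmf_iff, intro ballI)
      fix x assume x: "x \<in> set_pmf (q s)"
      have gx: "g x = s" using bm_q[OF bm x] .
      show "(\<integral>\<^sup>+a. (ennreal (?pl x a) + (\<integral>\<^sup>+s'. \<integral>\<^sup>+tr. lsum ?pl tr \<partial>measure_pmf (traj T q pol 0 s') \<partial>measure_pmf (T s a)))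
        \<partial>measure_pmf (pol x)) = 0" using gx lev by simp
    qed
    then show ?thesis by simp
  qed
  finally show ?case using L by simp
next
  case (Suc n s)
  note lev = Suc.prems
  let ?pl = "\<lambda>y a. if levS (g y) < H then \<psi> y a else 0"
  have pl: "\<And>y a. 0 \<le> ?pl y a" using psi by simp
  have ph: "\<And>x a. 0 \<le> (\<lambda>x a. \<phi> x) x a" using phi by simp
  have key: "(\<integral>\<^sup>+s'. \<integral>\<^sup>+tr. lsum (\<lambda>x a. \<phi> x) tr \<partial>measure_pmf (traj T q pol (Suc n) s') \<partial>measure_pmf (T s a))
      = ennreal (?pl x a) + (\<integral>\<^sup>+s'. \<integral>\<^sup>+tr. lsum ?pl tr \<partial>measure_pmf (traj T q pol (Suc n) s') \<partial>measure_pmf (T s a))"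
    if x: "x \<in> set_pmf (q s)" for x a
  proof -
    have gx: "g x = s" using bm_q[OF bm x] .
    have lt: "levS s < H" using lev by simp
    have "(\<integral>\<^sup>+s'. \<integral>\<^sup>+tr. lsum (\<lambda>x a. \<phi> x) tr \<partial>measure_pmf (traj T q pol (Suc n) s') \<partial>measure_pmf (T s a))
      = (\<integral>\<^sup>+s'. (\<integral>\<^sup>+x. ennreal (\<phi> x) \<partial>measure_pmf (q s')) + (\<integral>\<^sup>+tr. lsum ?pl tr \<partial>measure_pmf (traj T q pol (Suc n) s')) \<partial>measure_pmf (T s a))"
    proof (rule nn_integral_cong_AE, unfold AE_measure_pmf_iff, intro ballI)
      fix s' assume s': "s' \<in> set_pmf (T s a)"
      have "levS s' = Suc (levS s)" using bm_T[OF bm lt s'] .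
      then have "levS s' + Suc n = Suc H" using lev by simp
      then show "(\<integral>\<^sup>+tr. lsum (\<lambda>x a. \<phi> x) tr \<partial>measure_pmf (traj T q pol (Suc n) s'))
        = (\<integral>\<^sup>+x. ennreal (\<phi> x) \<partial>measure_pmf (q s')) + (\<integral>\<^sup>+tr. lsum ?pl tr \<partial>measure_pmf (traj T q pol (Suc n) s'))"
        by (rule Suc.IH)
    qed
    also have "\<dots> = (\<integral>\<^sup>+s'. (\<integral>\<^sup>+x. ennreal (\<phi> x) \<partial>measure_pmf (q s')) \<partial>measure_pmf (T s a))
       + (\<integral>\<^sup>+s'. (\<integral>\<^sup>+tr. lsum ?pl tr \<partial>measure_pmf (traj T q pol (Suc n) s')) \<partial>measure_pmf (T s a))"
      by (rule nn_add)
    also have "(\<integral>\<^sup>+s'. (\<integral>\<^sup>+x. ennreal (\<phi> x) \<partial>measure_pmf (q s')) \<partial>measure_pmf (T s a)) = ennreal (?pl x a)"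
      using psieq[of x a] gx lt by (simp add: nn_integral_bind_pmf)
    finally show ?thesis .
  qed
  have "(\<integral>\<^sup>+tr. lsum (\<lambda>x a. \<phi> x) tr \<partial>measure_pmf (traj T q pol (Suc (Suc n)) s))
     = (\<integral>\<^sup>+x. \<integral>\<^sup>+a. (ennreal (\<phi> x) + (\<integral>\<^sup>+s'. \<integral>\<^sup>+tr. lsum (\<lambda>x a. \<phi> x) tr \<partial>measure_pmf (traj T q pol (Suc n) s') \<partial>measure_pmf (T s a)))
        \<partial>measure_pmf (pol x) \<partial>measure_pmf (q s))" by (rule E_traj_Suc[OF ph])
  also have "\<dots> = (\<integral>\<^sup>+x. ennreal (\<phi> x) + (\<integral>\<^sup>+a. (ennreal (?pl x a) + (\<integral>\<^sup>+s'. \<integral>\<^sup>+tr. lsum ?pl tr \<partial>measure_pmf (traj T q pol (Suc n) s') \<partial>measure_pmf (T s a)))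
        \<partial>measure_pmf (pol x)) \<partial>measure_pmf (q s))"
  proof (rule nn_integral_cong_AE, unfold AE_measure_pmf_iff, intro ballI)
    fix x assume x: "x \<in> set_pmf (q s)"
    show "(\<integral>\<^sup>+a. (ennreal (\<phi> x) + (\<integral>\<^sup>+s'. \<integral>\<^sup>+tr. lsum (\<lambda>x a. \<phi> x) tr \<partial>measure_pmf (traj T q pol (Suc n) s') \<partial>measure_pmf (T s a)))
        \<partial>measure_pmf (pol x)) = ennreal (\<phi> x) + (\<integral>\<^sup>+a. (ennreal (?pl x a) + (\<integral>\<^sup>+s'. \<integral>\<^sup>+tr. lsum ?pl tr \<partial>measure_pmf (traj T q pol (Suc n) s') \<partial>measure_pmf (T s a)))
        \<partial>measure_pmf (pol x))"
      by (simp only: key[OF x] nn_const_add)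
  qed
  also have "\<dots> = (\<integral>\<^sup>+x. ennreal (\<phi> x) \<partial>measure_pmf (q s)) + (\<integral>\<^sup>+x. (\<integral>\<^sup>+a. (ennreal (?pl x a) + (\<integral>\<^sup>+s'. \<integral>\<^sup>+tr. lsum ?pl tr \<partial>measure_pmf (traj T q pol (Suc n) s') \<partial>measure_pmf (T s a)))
        \<partial>measure_pmf (pol x)) \<partial>measure_pmf (q s))"
    by (rule nn_add)
  also have "(\<integral>\<^sup>+x. (\<integral>\<^sup>+a. (ennreal (?pl x a) + (\<integral>\<^sup>+s'. \<integral>\<^sup>+tr. lsum ?pl tr \<partial>measure_pmf (traj T q pol (Suc n) s') \<partial>measure_pmf (T s a)))
        \<partial>measure_pmf (pol x)) \<partial>measure_pmf (q s)) = (\<integral>\<^sup>+tr. lsum ?pl tr \<partial>measure_pmf (traj T q pol (Suc (Suc n)) s))"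
    by (rule E_traj_Suc[OF pl, symmetric])
  finally show ?case .
qed

lemma count_episode:
  assumes bm: "block_mdp H levS mu T q g"
    and phi: "\<And>x. 0 \<le> \<phi> x" and psi: "\<And>y a. 0 \<le> \<psi> y a"
    and psieq: "\<And>y a. ennreal (\<psi> y a) = (\<integral>\<^sup>+x. ennreal (\<phi> x) \<partial>measure_pmf (bind_pmf (T (g y) a) q))"
  shows "(\<integral>\<^sup>+tr. lsum (\<lambda>x a. \<phi> x) tr \<partial>measure_pmf (episode H mu T q pol))
    = (\<integral>\<^sup>+s. \<integral>\<^sup>+x. ennreal (\<phi> x) \<partial>measure_pmf (q s) \<partial>measure_pmf mu)
      + (\<integral>\<^sup>+tr. lsum (\<lambda>y a. if levS (g y) < H then \<psi> y a else 0) tr \<partial>measure_pmf (episode H mu T q pol))"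
proof -
  have "1 \<le> H" using bm_lev1[OF bm, of undefined] bm_levH[OF bm, of undefined] by simp
  then obtain n where Hn: "H = Suc n" by (cases H) auto
  have "(\<integral>\<^sup>+tr. lsum (\<lambda>x a. \<phi> x) tr \<partial>measure_pmf (episode H mu T q pol))
     = (\<integral>\<^sup>+s. \<integral>\<^sup>+tr. lsum (\<lambda>x a. \<phi> x) tr \<partial>measure_pmf (traj T q pol H s) \<partial>measure_pmf mu)"
    by (simp add: episode_def nn_integral_bind_pmf)
  also have "\<dots> = (\<integral>\<^sup>+s. (\<integral>\<^sup>+x. ennreal (\<phi> x) \<partial>measure_pmf (q s))
      + (\<integral>\<^sup>+tr. lsum (\<lambda>y a. if levS (g y) < H then \<psi> y a else 0) tr \<partial>measure_pmf (traj T q pol H s)) \<partial>measure_pmf mu)"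
  proof (rule nn_integral_cong_AE, unfold AE_measure_pmf_iff, intro ballI)
    fix s assume "s \<in> set_pmf mu"
    then have "levS s + Suc n = Suc H" using bm_mu[OF bm] Hn by simp
    then show "(\<integral>\<^sup>+tr. lsum (\<lambda>x a. \<phi> x) tr \<partial>measure_pmf (traj T q pol H s)) = (\<integral>\<^sup>+x. ennreal (\<phi> x) \<partial>measure_pmf (q s))
      + (\<integral>\<^sup>+tr. lsum (\<lambda>y a. if levS (g y) < H then \<psi> y a else 0) tr \<partial>measure_pmf (traj T q pol H s))"
      unfolding Hn by (rule count_traj[OF bm phi psi psieq, unfolded Hn])
  qed
  also have "\<dots> = (\<integral>\<^sup>+s. \<integral>\<^sup>+x. ennreal (\<phi> x) \<partial>measure_pmf (q s) \<partial>measure_pmf mu)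
      + (\<integral>\<^sup>+tr. lsum (\<lambda>y a. if levS (g y) < H then \<psi> y a else 0) tr \<partial>measure_pmf (episode H mu T q pol))"
    by (simp add: nn_add episode_def nn_integral_bind_pmf)
  finally show ?thesis .
qed

lemma pmf_summable_on: "pmf p summable_on A"
proof -
  have "Infinite_Sum.abs_summable_on (pmf p) A"
    using pmf_abs_summable[of p A] abs_summable_equivalent by blast
  then show ?thesis by simp
qed

lemma obs_nonneg: "0 \<le> obs_trans T q g y a x" by (simp add: obs_trans_def)
lemma obs_le1: "obs_trans T q g y a x \<le> 1" unfolding obs_trans_def by (intro mult_le_one pmf_le_1 pmf_nonneg)

lemma pmf_bind_obs:
  assumes bm: "block_mdp H levS mu T q g"
  shows "pmf (bind_pmf (T (g y) a) q) x = obs_trans T q g y a x"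
proof -
  have pt: "ennreal (pmf (q s') x) = ennreal (pmf (q (g x)) x) * indicator {g x} s'" for s'
  proof (cases "s' = g x")
    case False
    then have "x \<notin> set_pmf (q s')" using bm_q[OF bm] by blast
    then show ?thesis using False by (simp add: set_pmf_iff)
  qed simp
  have "ennreal (pmf (bind_pmf (T (g y) a) q) x) = (\<integral>\<^sup>+s'. ennreal (pmf (q s') x) \<partial>measure_pmf (T (g y) a))"
    by (rule ennreal_pmf_bind)
  also have "\<dots> = (\<integral>\<^sup>+s'. ennreal (pmf (q (g x)) x) * indicator {g x} s' \<partial>measure_pmf (T (g y) a))"
    by (rule nn_integral_cong) (rule pt)
  also have "\<dots> = ennreal (pmf (q (g x)) x) * ennreal (pmf (T (g y) a) (g x))"
    by (simp add: nn_integral_cmult emeasure_pmf_single)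
  also have "\<dots> = ennreal (obs_trans T q g y a x)"
    by (simp add: obs_trans_def ennreal_mult)
  finally show ?thesis by (simp add: obs_trans_def)
qed

lemma KI_prop:
  fixes T :: "'s \<Rightarrow> 'a::finite \<Rightarrow> 's pmf" and q :: "'s \<Rightarrow> 'x::countable pmf"
  assumes KI: "backward_KI T q g x x0" and nz: "obs_trans T q g y0 a0 x0 \<noteq> 0"
  shows "\<exists>c\<ge>0. \<forall>y a. obs_trans T q g y a x = c * obs_trans T q g y a x0"
proof -
  define u :: "('x \<times> 'a) pmf" where "u = map_pmf from_nat (geometric_pmf (1/2))"
  have su: "set_pmf u = UNIV"
    unfolding u_def by (auto simp: set_pmf_geometric image_iff intro: exI[of _ "to_nat _"])
  have upos: "0 < pmf u p" for p
    using su pmf_nonneg[of u p] by (metis UNIV_I less_eq_real_def set_pmf_iff)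
  define Ow where "Ow z p = obs_trans T q g (fst p) (snd p) z * pmf u p" for z p
  define D where "D z = infsum (Ow z) UNIV" for z
  have Onn: "0 \<le> Ow z p" for z p by (simp add: Ow_def obs_nonneg)
  have Osum: "Ow z summable_on UNIV" for z
    by (rule summable_on_comparison_test[OF pmf_summable_on[of u UNIV]])
       (auto simp: Ow_def obs_nonneg obs_le1 mult_left_le_one_le)
  have Dnn: "0 \<le> D z" for z unfolding D_def by (rule infsum_nonneg) (simp add: Onn)
  have Dzero: "Ow z p = 0" if "D z = 0" for z p
    using nonneg_infsum_le_0D[of "Ow z" UNIV p] that Osum Onn unfolding D_def by simp
  have eqs: "Ow x p / D x = Ow x0 p / D x0" for p
  proof -
    have "back_post T q g u x = back_post T q g u x0" using KI su unfolding backward_KI_def by blast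
    then have "back_post T q g u x p = back_post T q g u x0 p" by simp
    then show ?thesis unfolding back_post_def Ow_def D_def by simp
  qed
  have D0: "0 < D x0"
  proof (rule ccontr)
    assume "\<not> 0 < D x0"
    then have "D x0 = 0" using Dnn[of x0] by simp
    then have "Ow x0 (y0, a0) = 0" by (rule Dzero)
    then show False using nz upos[of "(y0, a0)"] by (simp add: Ow_def)
  qed
  show ?thesis
  proof (intro exI[of _ "D x / D x0"] conjI allI)
    show "0 \<le> D x / D x0" using Dnn D0 by simp
    fix y a
    show "obs_trans T q g y a x = D x / D x0 * obs_trans T q g y a x0"
    proof (cases "D x = 0")
      case True
      then have "Ow x (y, a) = 0" by (rule Dzero)
      then show ?thesis using True upos[of "(y, a)"] by (simp add: Ow_def)
    next
      case False
      have "Ow x (y, a) = Ow x0 (y, a) * D x / D x0"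
        using eqs[of "(y, a)"] False D0 by (simp add: field_simps)
      then have "pmf u (y, a) * obs_trans T q g y a x = pmf u (y, a) * (D x / D x0 * obs_trans T q g y a x0)"
        unfolding Ow_def by (simp add: algebra_simps)
      then have "pmf u (y, a) = 0 \<or> obs_trans T q g y a x = D x / D x0 * obs_trans T q g y a x0"
        by (simp only: mult_cancel_left)
      then show ?thesis using upos[of "(y, a)"] by linarith
    qed
  qed
qed

lemma lsum_scale:
  assumes "\<And>y a. \<psi> y a = k * w y a" "0 \<le> k" "\<And>y a. 0 \<le> w y a"
  shows "lsum \<psi> tr = ennreal k * lsum w tr"
proof -
  have "sum_list (map (\<lambda>(x, a). \<psi> x a) tr) = k * sum_list (map (\<lambda>(x, a). w x a) tr)"
    by (induction tr) (auto simp: assms(1) algebra_simps)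
  moreover have "0 \<le> sum_list (map (\<lambda>(x, a). w x a) tr)"
    by (rule sum_list_nonneg) (auto simp: assms(3))
  ultimately show ?thesis unfolding lsum_def using assms(2) by (simp add: ennreal_mult)
qed

lemma dist_count:
  "distinct (map fst tr) \<Longrightarrow>
   sum_list (map (\<lambda>(x, a). if x = x' then 1 else 0) tr) = (if x' \<in> fst ` set tr then (1::real) else 0)"
proof (induction tr)
  case Nil then show ?case by simp
next
  case (Cons p tr)
  obtain x a where p: "p = (x, a)" by (cases p)
  show ?case using Cons p by (auto simp: image_iff)
qed

lemma count_le_length:
  "sum_list (map (\<lambda>(x, a). if x \<in> X' then 1 else 0) tr) \<le> real (length tr)"
  by (induction tr) auto

lemma count_nonneg: "0 \<le> sum_list (map (\<lambda>(x, a). if x \<in> X' then 1 else (0::real)) tr)"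
  by (induction tr) auto

theorem mainTheorem7:
  fixes H :: nat and levS :: "'s::finite \<Rightarrow> nat" and mu :: "'s pmf"
    and T :: "'s \<Rightarrow> 'a::finite \<Rightarrow> 's pmf" and q :: "'s \<Rightarrow> 'x::countable pmf"
    and g :: "'x \<Rightarrow> 's" and X' :: "'x set"
  assumes "block_mdp H levS mu T q g"
    and "\<forall>x1\<in>X'. \<forall>x2\<in>X'. backward_KI T q g x1 x2"
  shows "\<exists>pol :: 'x \<Rightarrow> 'a pmf.
           (\<forall>x'\<in>X'. \<forall>pol'. visit_prob H mu T q pol' x' \<le> visit_prob H mu T q pol x') \<and>
           (\<forall>pol'. exp_reward H mu T q pol' (\<lambda>x a. if x \<in> X' then 1 else 0)
                  \<le> exp_reward H mu T q pol (\<lambda>x a. if x \<in> X' then 1 else 0))"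
proof -
  note bm = assms(1)
  have "\<exists>c w. (\<forall>x\<in>X'. 0 \<le> c x) \<and> (\<forall>y a. 0 \<le> w y a) \<and>
          (\<forall>x\<in>X'. \<forall>y a. obs_trans T q g y a x = c x * w y a)"
  proof (cases "\<exists>x0\<in>X'. \<exists>y0 a0. obs_trans T q g y0 a0 x0 \<noteq> 0")
    case True
    then obtain x0 y0 a0 where x0: "x0 \<in> X'" and nz: "obs_trans T q g y0 a0 x0 \<noteq> 0" by blast
    have "\<forall>x\<in>X'. \<exists>c\<ge>0. \<forall>y a. obs_trans T q g y a x = c * obs_trans T q g y a x0"
      using KI_prop[OF _ nz] assms(2) x0 by blast
    then obtain c where c: "\<forall>x\<in>X'. 0 \<le> c x \<and> (\<forall>y a. obs_trans T q g y a x = c x * obs_trans T q g y a x0)"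
      by metis
    show ?thesis
      by (rule exI[of _ c], rule exI[of _ "\<lambda>y a. obs_trans T q g y a x0"]) (use c obs_nonneg in auto)
  next
    case False
    then show ?thesis by (intro exI[of _ "\<lambda>_. 0"] exI[of _ "\<lambda>_ _. 0"]) auto
  qed
  then obtain c w where cnn: "\<And>x. x \<in> X' \<Longrightarrow> 0 \<le> c x" and wnn: "\<And>y a. 0 \<le> w y a"
    and cw: "\<And>x y a. x \<in> X' \<Longrightarrow> obs_trans T q g y a x = c x * w y a" by blast
  define wl where "wl y a = (if levS (g y) < H then w y a else 0)" for y a
  have wlnn: "\<And>y a. 0 \<le> wl y a" using wnn by (simp add: wl_def)
  define J where "J pol = (\<integral>\<^sup>+tr. lsum wl tr \<partial>measure_pmf (episode H mu T q pol))" for pol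
  have "\<exists>ps. \<forall>pol. (\<integral>\<^sup>+tr. lsum wl tr \<partial>measure_pmf (episode H mu T q pol))
                    \<le> (\<integral>\<^sup>+tr. lsum wl tr \<partial>measure_pmf (episode H mu T q ps))"
    by (rule DP[OF bm]) (rule wlnn)
  then obtain ps where ps: "\<And>pol. J pol \<le> J ps" unfolding J_def by blast

  have vp: "ennreal (visit_prob H mu T q pol x') =
      (\<integral>\<^sup>+s. \<integral>\<^sup>+x. ennreal (if x = x' then 1 else 0) \<partial>measure_pmf (q s) \<partial>measure_pmf mu) + ennreal (c x') * J pol"
    if x': "x' \<in> X'" for pol x'
  proof -
    let ?phi = "\<lambda>x. if x = x' then 1 else (0::real)"
    have psieq: "ennreal (obs_trans T q g y a x') = (\<integral>\<^sup>+x. ennreal (?phi x) \<partial>measure_pmf (bind_pmf (T (g y) a) q))" for y a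
    proof -
      have "(\<integral>\<^sup>+x. ennreal (?phi x) \<partial>measure_pmf (bind_pmf (T (g y) a) q))
          = (\<integral>\<^sup>+x. indicator {x'} x \<partial>measure_pmf (bind_pmf (T (g y) a) q))"
        by (rule nn_integral_cong) (simp add: indicator_def)
      also have "\<dots> = ennreal (pmf (bind_pmf (T (g y) a) q) x')"
        by (simp only: nn_integral_indicator sets_measure_pmf UNIV_I emeasure_pmf_single)
      finally show ?thesis by (simp add: pmf_bind_obs[OF bm])
    qed
    have "ennreal (visit_prob H mu T q pol x') = emeasure (measure_pmf (episode H mu T q pol)) {tr. x' \<in> fst ` set tr}"
      by (simp add: visit_prob_def measure_pmf.emeasure_eq_measure)
    also have "\<dots> = (\<integral>\<^sup>+tr. indicator {tr. x' \<in> fst ` set tr} tr \<partial>measure_pmf (episode H mu T q pol))"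
      by simp
    also have "\<dots> = (\<integral>\<^sup>+tr. lsum (\<lambda>x a. ?phi x) tr \<partial>measure_pmf (episode H mu T q pol))"
    proof (rule nn_integral_cong_AE, unfold AE_measure_pmf_iff, intro ballI)
      fix tr assume tr: "tr \<in> set_pmf (episode H mu T q pol)"
      show "indicator {tr. x' \<in> fst ` set tr} tr = lsum (\<lambda>x a. ?phi x) tr"
        unfolding lsum_def using dist_count[OF episode_distinct[OF bm tr], of x']
        by (simp add: indicator_def)
    qed
    also have "\<dots> = (\<integral>\<^sup>+s. \<integral>\<^sup>+x. ennreal (?phi x) \<partial>measure_pmf (q s) \<partial>measure_pmf mu)
      + (\<integral>\<^sup>+tr. lsum (\<lambda>y a. if levS (g y) < H then obs_trans T q g y a x' else 0) tr \<partial>measure_pmf (episode H mu T q pol))"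
      by (rule count_episode[OF bm _ obs_nonneg psieq]) simp
    also have "(\<integral>\<^sup>+tr. lsum (\<lambda>y a. if levS (g y) < H then obs_trans T q g y a x' else 0) tr \<partial>measure_pmf (episode H mu T q pol))
       = ennreal (c x') * J pol"
      unfolding J_def
      by (subst lsum_scale[where k = "c x'" and w = wl], simp add: wl_def cw[OF x'], rule cnn[OF x'], rule wlnn)
         (simp add: nn_integral_cmult)
    finally show ?thesis .
  qed

  define C where "C = infsum c X'"
  have Cnn: "0 \<le> C" unfolding C_def by (rule infsum_nonneg) (simp add: cnn)
  let ?phi = "\<lambda>x. if x \<in> X' then 1 else (0::real)"
  let ?psi = "\<lambda>y a. measure_pmf.prob (bind_pmf (T (g y) a) q) X'"
  have psiC: "?psi y a = C * w y a" for y a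
  proof -
    have "?psi y a = infsetsum (pmf (bind_pmf (T (g y) a) q)) X'"
      by (rule measure_pmf_conv_infsetsum)
    also have "\<dots> = infsum (pmf (bind_pmf (T (g y) a) q)) X'"
      by (rule infsetsum_infsum) (rule pmf_abs_summable)
    also have "\<dots> = infsum (\<lambda>x. c x * w y a) X'"
      by (rule infsum_cong) (simp add: pmf_bind_obs[OF bm] cw)
    also have "\<dots> = C * w y a" unfolding C_def by (rule infsum_cmult_left')
    finally show ?thesis .
  qed
  have psieq2: "ennreal (?psi y a) = (\<integral>\<^sup>+x. ennreal (?phi x) \<partial>measure_pmf (bind_pmf (T (g y) a) q))" for y a
  proof -
    have "(\<integral>\<^sup>+x. ennreal (?phi x) \<partial>measure_pmf (bind_pmf (T (g y) a) q))
        = (\<integral>\<^sup>+x. indicator X' x \<partial>measure_pmf (bind_pmf (T (g y) a) q))"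
      by (rule nn_integral_cong) (simp add: indicator_def)
    also have "\<dots> = emeasure (measure_pmf (bind_pmf (T (g y) a) q)) X'"
      by (simp only: nn_integral_indicator sets_measure_pmf UNIV_I)
    also have "\<dots> = ennreal (?psi y a)" by (rule measure_pmf.emeasure_eq_measure)
    finally show ?thesis by (rule sym)
  qed
  have er: "ennreal (exp_reward H mu T q pol (\<lambda>x a. if x \<in> X' then 1 else 0)) =
      (\<integral>\<^sup>+s. \<integral>\<^sup>+x. ennreal (?phi x) \<partial>measure_pmf (q s) \<partial>measure_pmf mu) + ennreal C * J pol" for pol
  proof -
    have fin: "(\<integral>\<^sup>+tr. lsum (\<lambda>x a. ?phi x) tr \<partial>measure_pmf (episode H mu T q pol)) < \<top>"
    proof -
      have "(\<integral>\<^sup>+tr. lsum (\<lambda>x a. ?phi x) tr \<partial>measure_pmf (episode H mu T q pol))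
          \<le> (\<integral>\<^sup>+tr. ennreal (real H) \<partial>measure_pmf (episode H mu T q pol))"
      proof (rule nn_integral_mono_AE, unfold AE_measure_pmf_iff, intro ballI)
        fix tr assume tr: "tr \<in> set_pmf (episode H mu T q pol)"
        show "lsum (\<lambda>x a. ?phi x) tr \<le> ennreal (real H)"
          unfolding lsum_def using count_le_length[of X' tr] episode_length[OF bm tr]
          by (simp add: ennreal_leI)
      qed
      also have "\<dots> = ennreal (real H)" by (rule nn_const)
      finally show ?thesis by (simp add: order_le_less_trans)
    qed
    have "exp_reward H mu T q pol (\<lambda>x a. if x \<in> X' then 1 else 0)
        = enn2real (\<integral>\<^sup>+tr. lsum (\<lambda>x a. ?phi x) tr \<partial>measure_pmf (episode H mu T q pol))"
      unfolding exp_reward_def lsum_def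
      by (rule integral_eq_nn_integral) (simp_all add: count_nonneg)
    then have "ennreal (exp_reward H mu T q pol (\<lambda>x a. if x \<in> X' then 1 else 0))
        = (\<integral>\<^sup>+tr. lsum (\<lambda>x a. ?phi x) tr \<partial>measure_pmf (episode H mu T q pol))"
      using fin by (simp add: ennreal_enn2real)
    also have "\<dots> = (\<integral>\<^sup>+s. \<integral>\<^sup>+x. ennreal (?phi x) \<partial>measure_pmf (q s) \<partial>measure_pmf mu)
      + (\<integral>\<^sup>+tr. lsum (\<lambda>y a. if levS (g y) < H then ?psi y a else 0) tr \<partial>measure_pmf (episode H mu T q pol))"
      by (rule count_episode[OF bm _ _ psieq2]) simp_all
    also have "(\<integral>\<^sup>+tr. lsum (\<lambda>y a. if levS (g y) < H then ?psi y a else 0) tr \<partial>measure_pmf (episode H mu T q pol))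
       = ennreal C * J pol"
      unfolding J_def
      by (subst lsum_scale[where k = C and w = wl], simp add: wl_def psiC, rule Cnn, rule wlnn)
         (simp add: nn_integral_cmult)
    finally show ?thesis .
  qed

  show ?thesis
  proof (intro exI[of _ ps] conjI ballI allI)
    fix x' pol' assume x': "x' \<in> X'"
    have "ennreal (visit_prob H mu T q pol' x') \<le> ennreal (visit_prob H mu T q ps x')"
      unfolding vp[OF x'] by (intro add_left_mono mult_left_mono ps) simp
    then show "visit_prob H mu T q pol' x' \<le> visit_prob H mu T q ps x'"
      by (simp add: ennreal_le_iff visit_prob_def)
  next
    fix pol'
    have "ennreal (exp_reward H mu T q pol' (\<lambda>x a. if x \<in> X' then 1 else 0))
       \<le> ennreal (exp_reward H mu T q ps (\<lambda>x a. if x \<in> X' then 1 else 0))"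
      unfolding er by (intro add_left_mono mult_left_mono ps) simp
    moreover have "0 \<le> exp_reward H mu T q ps (\<lambda>x a. if x \<in> X' then 1 else 0)"
      unfolding exp_reward_def by (rule integral_nonneg_AE) (simp add: count_nonneg)
    ultimately show "exp_reward H mu T q pol' (\<lambda>x a. if x \<in> X' then 1 else 0)
       \<le> exp_reward H mu T q ps (\<lambda>x a. if x \<in> X' then 1 else 0)"
      by (simp add: ennreal_le_iff)
  qed
qed

end
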